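(* For any $n$, any $0\le k\le n$, and any $\lambda,\mu\vdash n$, $$m\big((\lambda,\mu),\alpha_{H_n^k}\big)=\frac1{n!}\sum_{\pi\in S_n}\chi_\lambda(\pi)\chi_\mu(\pi)\,(n-|\mathrm{supp}(\pi)|)_k .$$
   Context: Permutations are composed as functions, and $\pi\in S_n$ is identified with the permutation matrix whose $(i,j)$ entry is $1$ iff $i=\pi(j)$. For $A\in GL_n(\mathbb{Z}_2)$ let $\eta(A)$ (resp. $\theta(A)$) be the partition obtained by sorting the row sums (resp. column sums) of $A$, computed as integers, in weakly decreasing order. For $0\le k\le n$, $H_n^k=\{A\in GL_n(\mathbb{Z}_2)\mid \eta(A)=(n,n-1,\dots,n-k+1,1^{n-k}),\ \theta(A)=((k+1)^{n-k},k,k-1,\dots,1)\}$. $\alpha_{H_n^k}$ is the complex permutation representation of $S_n\times S_n$ on the space with basis $H_n^k$ given by $(\pi,\sigma)\bullet A=\pi A\sigma^{-1}$. For $\lambda,\mu\vdash n$, $m((\lambda,\mu),\varphi)$ denotes the multiplicity in $\varphi$ of the irreducible $S_n\times S_n$-representation $S^\lambda\otimes S^\mu$. $\chi_\lambda$ is the irreducible character of $S_n$ indexed by $\lambda$, $\mathrm{supp}(\pi)$ the set of points moved by $\pi$, and $(m)_k=m(m-1)\cdots(m-k+1)$. *)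

theory Defs
  imports "Jordan_Normal_Form.Matrix" "HOL-Library.Z2" "HOL-Combinatorics.Permutations"
begin

definition GL2 :: "nat \<Rightarrow> bit mat set" where
  "GL2 n = {A \<in> carrier_mat n n. invertible_mat A}"

definition perm_mat :: "nat \<Rightarrow> (nat \<Rightarrow> nat) \<Rightarrow> bit mat" where
  "perm_mat n p = mat n n (\<lambda>(i,j). if i = p j then 1 else 0)"

definition act :: "nat \<Rightarrow> (nat \<Rightarrow> nat) \<Rightarrow> (nat \<Rightarrow> nat) \<Rightarrow> bit mat \<Rightarrow> bit mat" where
  "act n p s A = perm_mat n p * A * perm_mat n (inv_into UNIV s)"

(* row / column sums computed as integers *)
definition row_sum :: "bit mat \<Rightarrow> nat \<Rightarrow> nat" where
  "row_sum A i = card {j. j < dim_col A \<and> A $$ (i,j) = 1}"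

definition col_sum :: "bit mat \<Rightarrow> nat \<Rightarrow> nat" where
  "col_sum A j = card {i. i < dim_row A \<and> A $$ (i,j) = 1}"

definition eta :: "bit mat \<Rightarrow> nat list" where
  "eta A = rev (sort (map (row_sum A) [0..<dim_row A]))"

definition theta :: "bit mat \<Rightarrow> nat list" where
  "theta A = rev (sort (map (col_sum A) [0..<dim_col A]))"

definition H :: "nat \<Rightarrow> nat \<Rightarrow> bit mat set" where
  "H n k = {A \<in> GL2 n.
      eta A = map (\<lambda>i. n - i) [0..<k] @ replicate (n - k) 1 \<and>
      theta A = replicate (n - k) (k + 1) @ map (\<lambda>i. k - i) [0..<k]}"

definition is_partition :: "nat \<Rightarrow> nat list \<Rightarrow> bool" where
  "is_partition n la \<longleftrightarrow> sorted (rev la) \<and> (\<forall>x\<in>set la. 0 < x) \<and> sum_list la = n"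

definition part :: "nat list \<Rightarrow> nat \<Rightarrow> nat" where
  "part la i = (if i < length la then la ! i else 0)"

(* Irreducible character chi_lambda of S_n, via the Frobenius character formula
   chi_lambda(pi) = [x^(lambda+delta)] a_delta * p_{cycle type of pi}, in n variables,
   delta = (n-1,...,0), a_delta = sum_w sgn(w) prod_i x_i^(n-1-w(i)).
   The coefficient of prod_i x_i^(lambda_i - i + w(i)) in the product of power sums
   over the cycles of pi counts the maps g assigning to every cycle a variable index,
   i.e. maps g on {..<n}, constant on cycles, with |g^{-1}(i)| = lambda_i - i + w(i). *)
definition chi :: "nat \<Rightarrow> nat list \<Rightarrow> (nat \<Rightarrow> nat) \<Rightarrow> int" where
  "chi n la p = (\<Sum>w | w permutes {..<n}.
      sign w * int (card {g \<in> {..<n} \<rightarrow>\<^sub>E {..<n}.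
          (\<forall>x<n. g (p x) = g x) \<and>
          (\<forall>i<n. card {x. x < n \<and> g x = i} + i = part la i + w i)}))"

(* multiplicity of S^lambda (x) S^mu in a permutation representation of S_n x S_n
   on a finite set X with action a, computed as the character inner product
   (characters of S_n are real-valued; the permutation character is the number
   of fixed points) *)
definition mult_perm_rep ::
  "nat \<Rightarrow> 'x set \<Rightarrow> ((nat \<Rightarrow> nat) \<Rightarrow> (nat \<Rightarrow> nat) \<Rightarrow> 'x \<Rightarrow> 'x) \<Rightarrow> nat list \<Rightarrow> nat list \<Rightarrow> real" where
  "mult_perm_rep n X a la mu =
     (1 / (fact n)^2) * (\<Sum>p | p permutes {..<n}. \<Sum>s | s permutes {..<n}.
        real (card {x \<in> X. a p s x = x}) * of_int (chi n la p) * of_int (chi n mu s))"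

definition supp :: "nat \<Rightarrow> (nat \<Rightarrow> nat) \<Rightarrow> nat set" where
  "supp n p = {x. x < n \<and> p x \<noteq> x}"

definition ffac :: "nat \<Rightarrow> nat \<Rightarrow> nat" where
  "ffac m k = (\<Prod>i<k. m - i)"

end

theory Submission
  imports Defs "Jordan_Normal_Form.Determinant"
begin

abbreviation iv :: "(nat \<Rightarrow> nat) \<Rightarrow> nat \<Rightarrow> nat" where "iv p \<equiv> inv_into UNIV p"


lemma perm_mat_carrier[simp]: "perm_mat n p \<in> carrier_mat n n"
  unfolding perm_mat_def by simp

lemma perm_in: "p permutes {..<n} \<Longrightarrow> i < n \<Longrightarrow> p i < n"
  using permutes_in_image[of p "{..<n}" i] by simp

lemma perm_inv_in: "p permutes {..<n} \<Longrightarrow> i < n \<Longrightarrow> iv p i < n"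
  by (meson lessThan_iff permutes_inv permutes_in_image)

lemma perm_mult_left:
  assumes p: "p permutes {..<n}" and A: "A \<in> carrier_mat n m" and i: "i < n" and j: "j < m"
  shows "(perm_mat n p * A) $$ (i,j) = A $$ (iv p i, j)"
proof -
  have ip: "iv p i < n" using p i by (rule perm_inv_in)
  have "(perm_mat n p * A) $$ (i,j) = (\<Sum>l = 0..<n. (if i = p l then 1 else 0) * A $$ (l,j))"
    using A i j by (simp add: perm_mat_def scalar_prod_def)
  also have "\<dots> = (\<Sum>l = 0..<n. if l = iv p i then A $$ (l,j) else 0)"
    apply (rule sum.cong[OF refl])
    using permutes_inv_eq[OF p] by (metis mult_1 mult_zero_left)
  also have "\<dots> = A $$ (iv p i, j)" using ip by (simp add: sum.delta')
  finally show ?thesis .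
qed

lemma perm_mult_right:
  assumes q: "q permutes {..<n}" and A: "A \<in> carrier_mat m n" and i: "i < m" and j: "j < n"
  shows "(A * perm_mat n q) $$ (i,j) = A $$ (i, q j)"
proof -
  have qj: "q j < n" using q j by (rule perm_in)
  have "(A * perm_mat n q) $$ (i,j) = (\<Sum>l = 0..<n. A $$ (i,l) * (if l = q j then 1 else 0))"
    using A i j by (simp add: perm_mat_def scalar_prod_def)
  also have "\<dots> = (\<Sum>l = 0..<n. if l = q j then A $$ (i,l) else 0)"
    by (rule sum.cong[OF refl]) simp
  also have "\<dots> = A $$ (i, q j)" using qj by (simp add: sum.delta')
  finally show ?thesis .
qed

lemma act_carrier:
  "A \<in> carrier_mat n n \<Longrightarrow> act n p s A \<in> carrier_mat n n"
  unfolding act_def by (metis mult_carrier_mat perm_mat_carrier)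

lemma act_entry:
  assumes p: "p permutes {..<n}" and s: "s permutes {..<n}" and A: "A \<in> carrier_mat n n"
    and i: "i < n" and j: "j < n"
  shows "act n p s A $$ (i,j) = A $$ (iv p i, iv s j)"
proof -
  have s': "iv s permutes {..<n}" using s by (rule permutes_inv)
  have c: "perm_mat n p * A \<in> carrier_mat n n" using A by (metis mult_carrier_mat perm_mat_carrier)
  have "act n p s A $$ (i,j) = (perm_mat n p * A) $$ (i, iv s j)"
    unfolding act_def by (rule perm_mult_right[OF s' c i j])
  also have "\<dots> = A $$ (iv p i, iv s j)"
    using perm_mult_left[OF p A i] perm_inv_in[OF s j] by simp
  finally show ?thesis .
qed

lemma act_eq:
  assumes p: "p permutes {..<n}" and s: "s permutes {..<n}" and A: "A \<in> carrier_mat n n"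
  shows "act n p s A = mat n n (\<lambda>(i,j). A $$ (iv p i, iv s j))"
  apply (rule eq_matI)
  using act_entry[OF p s A] act_carrier[OF A, of p s] by auto

lemma perm_mat_inv_mult:
  assumes p: "p permutes {..<n}"
  shows "perm_mat n p * perm_mat n (iv p) = 1\<^sub>m n"
proof (rule eq_matI)
  fix i j assume i: "i < dim_row (1\<^sub>m n :: bit mat)" and j: "j < dim_col (1\<^sub>m n :: bit mat)"
  have "(perm_mat n p * perm_mat n (iv p)) $$ (i,j) = perm_mat n (iv p) $$ (iv p i, j)"
    using perm_mult_left[OF p perm_mat_carrier] i j by simp
  also have "\<dots> = (1\<^sub>m n :: bit mat) $$ (i,j)"
    using i j perm_inv_in[OF p] permutes_inv_inv[OF p] p
    by (simp add: perm_mat_def) (metis permutes_inv_eq)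
  finally show "(perm_mat n p * perm_mat n (iv p)) $$ (i,j) = (1\<^sub>m n :: bit mat) $$ (i,j)" .
qed (auto simp: perm_mat_def)

lemma det_imp_inv:
  assumes A: "(A :: bit mat) \<in> carrier_mat n n" and d: "det A \<noteq> 0"
  shows "\<exists>B\<in>carrier_mat n n. A * B = 1\<^sub>m n \<and> B * A = 1\<^sub>m n"
  using det_non_zero_imp_unit[OF A d, of "()"] unfolding Units_def ring_mat_def by auto

lemma invertible_I:
  assumes A: "(A :: bit mat) \<in> carrier_mat n n" and B: "B \<in> carrier_mat n n"
    and "A * B = 1\<^sub>m n" "B * A = 1\<^sub>m n"
  shows "invertible_mat A"
  unfolding invertible_mat_def inverts_mat_def using assms by auto

lemma inv_prod3:
  fixes A B C A' B' C' :: "bit mat"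
  assumes c: "A \<in> carrier_mat n n" "B \<in> carrier_mat n n" "C \<in> carrier_mat n n"
    "A' \<in> carrier_mat n n" "B' \<in> carrier_mat n n" "C' \<in> carrier_mat n n"
  and e: "A * A' = 1\<^sub>m n" "B * B' = 1\<^sub>m n" "C * C' = 1\<^sub>m n"
  shows "(A * B * C) * (C' * B' * A') = 1\<^sub>m n"
proof -
  have "(A * B * C) * (C' * B' * A') = A * (B * (C * C') * B') * A'"
    using c by (simp add: assoc_mult_mat[of _ n n _ n _ n])
  also have "\<dots> = 1\<^sub>m n" using c e by (simp add: assoc_mult_mat[of _ n n _ n _ n])
  finally show ?thesis .
qed

definition heavy_le :: "nat list \<Rightarrow> nat \<Rightarrow> nat \<Rightarrow> bool" where
  "heavy_le xs i m \<longleftrightarrow> (\<exists>a b. a \<le> b \<and> b < length xs \<and> i = xs!a \<and> m = xs!b)"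

definition R :: "nat list \<Rightarrow> nat \<Rightarrow> nat \<Rightarrow> bool" where
  "R xs i m \<longleftrightarrow> i = m \<or> (i \<in> set xs \<and> m \<notin> set xs) \<or> heavy_le xs i m"

definition Phi :: "nat \<Rightarrow> (nat \<Rightarrow> nat) \<Rightarrow> nat list \<Rightarrow> bit mat" where
  "Phi n t xs = mat n n (\<lambda>(i,j). if R xs i (t j) then 1 else 0)"

definition Dom :: "nat \<Rightarrow> nat \<Rightarrow> ((nat \<Rightarrow> nat) \<times> nat list) set" where
  "Dom n k = {(t, xs). t permutes {..<n} \<and> length xs = k \<and> distinct xs \<and> set xs \<subseteq> {..<n}}"

lemma Phi_carrier[simp]: "Phi n t xs \<in> carrier_mat n n"
  unfolding Phi_def by simp

lemma Phi_dims[simp]: "dim_row (Phi n t xs) = n" "dim_col (Phi n t xs) = n"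
  unfolding Phi_def by simp_all

lemma Phi_entry: "i < n \<Longrightarrow> j < n \<Longrightarrow> Phi n t xs $$ (i,j) = (if R xs i (t j) then 1 else 0)"
  unfolding Phi_def by simp

lemma Phi_entry1: "i < n \<Longrightarrow> j < n \<Longrightarrow> Phi n t xs $$ (i,j) = 1 \<longleftrightarrow> R xs i (t j)"
  unfolding Phi_def by simp

lemma R_map:
  assumes "inj p"
  shows "R (map p xs) (p i) (p m) = R xs i m"
proof -
  have e: "\<And>x y. p x = p y \<longleftrightarrow> x = y" using assms by (meson injD)
  have s: "\<And>x. p x \<in> set (map p xs) \<longleftrightarrow> x \<in> set xs" using assms by (auto simp: e)
  have "heavy_le (map p xs) (p i) (p m) \<longleftrightarrow> (\<exists>a b. a \<le> b \<and> b < length xs \<and> p i = p (xs!a) \<and> p m = p (xs!b))"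
    unfolding heavy_le_def by (metis (no_types) le_less_trans length_map nth_map)
  then have h: "heavy_le (map p xs) (p i) (p m) = heavy_le xs i m"
    by (simp add: e heavy_le_def)
  show ?thesis unfolding R_def using e s h by simp
qed

lemma Phi_equivariant:
  assumes p: "p permutes {..<n}" and s: "s permutes {..<n}"
  shows "act n p s (Phi n t xs) = Phi n (p \<circ> t \<circ> iv s) (map p xs)"
proof (rule eq_matI)
  fix i j assume i: "i < dim_row (Phi n (p \<circ> t \<circ> iv s) (map p xs))"
    and j: "j < dim_col (Phi n (p \<circ> t \<circ> iv s) (map p xs))"
  then have i: "i < n" and j: "j < n" by (auto simp: Phi_def)
  have inj: "inj p" using p by (simp add: permutes_inj)
  have pi: "p (iv p i) = i" using p by (meson permutes_inverses(1))
  have "act n p s (Phi n t xs) $$ (i,j) = Phi n t xs $$ (iv p i, iv s j)"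
    by (rule act_entry[OF p s Phi_carrier i j])
  also have "\<dots> = (if R xs (iv p i) (t (iv s j)) then 1 else 0)"
    using Phi_entry perm_inv_in[OF p i] perm_inv_in[OF s j] by simp
  also have "\<dots> = (if R (map p xs) (p (iv p i)) (p (t (iv s j))) then 1 else 0)"
    using R_map[OF inj] by simp
  also have "\<dots> = Phi n (p \<circ> t \<circ> iv s) (map p xs) $$ (i,j)"
    using Phi_entry[OF i j] pi by simp
  finally show "act n p s (Phi n t xs) $$ (i,j) = Phi n (p \<circ> t \<circ> iv s) (map p xs) $$ (i,j)" .
qed (auto simp: act_def Phi_def perm_mat_def)

lemma perm_card:
  fixes t :: "nat \<Rightarrow> nat"
  assumes t: "t permutes {..<n}"
  shows "card {j. j < n \<and> P (t j)} = card {m. m < n \<and> P m}"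
proof -
  have "{m. m < n \<and> P m} = t ` {j. j < n \<and> P (t j)}"
  proof
    show "t ` {j. j < n \<and> P (t j)} \<subseteq> {m. m < n \<and> P m}" using perm_in[OF t] by auto
    show "{m. m < n \<and> P m} \<subseteq> t ` {j. j < n \<and> P (t j)}"
    proof
      fix m assume m: "m \<in> {m. m < n \<and> P m}"
      have "t (iv t m) = m" using t by (meson permutes_inverses(1))
      then show "m \<in> t ` {j. j < n \<and> P (t j)}" using m perm_inv_in[OF t] by (metis (mono_tags, lifting) image_eqI mem_Collect_eq)
    qed
  qed
  moreover have "inj_on t {j. j < n \<and> P (t j)}"
    using t by (meson injD inj_onI permutes_inj)
  ultimately show ?thesis by (simp add: card_image)
qed

lemma heavy_le_nth:
  assumes d: "distinct xs" and a: "a < length xs"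
  shows "heavy_le xs (xs!a) m \<longleftrightarrow> (\<exists>b. a \<le> b \<and> b < length xs \<and> m = xs!b)"
  unfolding heavy_le_def using d a
  by (metis (no_types, lifting) le_less_trans nth_eq_iff_index_eq)

lemma heavy_le_nth2:
  assumes d: "distinct xs" and b: "b < length xs"
  shows "heavy_le xs i (xs!b) \<longleftrightarrow> (\<exists>a. a \<le> b \<and> i = xs!a)"
  unfolding heavy_le_def using d b
  by (metis (no_types, lifting) le_less_trans nth_eq_iff_index_eq)

lemma card_nth_image:
  assumes d: "distinct xs" and "A \<subseteq> {..<length xs}"
  shows "card ((!) xs ` A) = card A"
  using assms by (meson card_image inj_on_nth subset_iff lessThan_iff)

lemma row_sum_heavy:
  assumes D: "(t, xs) \<in> Dom n k" and a: "a < k"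
  shows "row_sum (Phi n t xs) (xs!a) = n - a"
proof -
  from D have t: "t permutes {..<n}" and len: "length xs = k" and d: "distinct xs"
    and sub: "set xs \<subseteq> {..<n}" by (auto simp: Dom_def)
  have xa: "xs!a < n" using sub a len nth_mem by blast
  have kn: "k \<le> n" using sub d len by (metis card_lessThan card_mono distinct_card finite_lessThan)
  have "row_sum (Phi n t xs) (xs!a) = card {j. j < n \<and> R xs (xs!a) (t j)}"
  proof -
    have "{j. j < dim_col (Phi n t xs) \<and> Phi n t xs $$ (xs!a, j) = 1} = {j. j < n \<and> R xs (xs!a) (t j)}"
      using Phi_entry1[OF xa] by auto
    then show ?thesis unfolding row_sum_def by simp
  qed
  also have "\<dots> = card {m. m < n \<and> R xs (xs!a) m}" by (rule perm_card[OF t])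
  also have "{m. m < n \<and> R xs (xs!a) m} = ({..<n} - set xs) \<union> (!) xs ` {a..<k}"
  proof -
    have "\<And>m. R xs (xs!a) m \<longleftrightarrow> m \<notin> set xs \<or> (\<exists>b. a \<le> b \<and> b < k \<and> m = xs!b)"
      unfolding R_def using heavy_le_nth[OF d, of a] a len nth_mem by auto
    then show ?thesis using sub len nth_mem by fastforce
  qed
  also have "card (({..<n} - set xs) \<union> (!) xs ` {a..<k}) = (n - k) + (k - a)"
  proof -
    have "card ({..<n} - set xs) = n - k" using sub d len by (simp add: card_Diff_subset distinct_card)
    moreover have "card ((!) xs ` {a..<k}) = k - a" using card_nth_image[OF d, of "{a..<k}"] len by (simp add: subset_eq)
    moreover have "({..<n} - set xs) \<inter> (!) xs ` {a..<k} = {}" using len by auto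
    ultimately show ?thesis by (simp add: card_Un_disjoint)
  qed
  finally show ?thesis using a kn by simp
qed

lemma row_sum_light:
  assumes D: "(t, xs) \<in> Dom n k" and i: "i < n" and ni: "i \<notin> set xs"
  shows "row_sum (Phi n t xs) i = 1"
proof -
  from D have t: "t permutes {..<n}" by (auto simp: Dom_def)
  have "row_sum (Phi n t xs) i = card {j. j < n \<and> R xs i (t j)}"
  proof -
    have "{j. j < dim_col (Phi n t xs) \<and> Phi n t xs $$ (i, j) = 1} = {j. j < n \<and> R xs i (t j)}"
      using Phi_entry1[OF i] by auto
    then show ?thesis unfolding row_sum_def by simp
  qed
  also have "\<dots> = card {m. m < n \<and> R xs i m}" by (rule perm_card[OF t])
  also have "{m. m < n \<and> R xs i m} = {i}"
    using ni i unfolding R_def heavy_le_def by auto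
  finally show ?thesis by simp
qed


lemma Dom_D:
  assumes "(t, xs) \<in> Dom n k"
  shows "t permutes {..<n}" "length xs = k" "distinct xs" "set xs \<subseteq> {..<n}" "k \<le> n"
  using assms apply (auto simp: Dom_def)
  by (metis card_lessThan card_mono distinct_card finite_lessThan)

lemma col_sum_Phi_aux:
  assumes j: "j < n"
  shows "col_sum (Phi n t xs) j = card {i. i < n \<and> R xs i (t j)}"
proof -
  have "{i. i < dim_row (Phi n t xs) \<and> Phi n t xs $$ (i, j) = 1} = {i. i < n \<and> R xs i (t j)}"
    using Phi_entry1[OF _ j] by auto
  then show ?thesis unfolding col_sum_def by simp
qed

lemma col_sum_light:
  assumes D: "(t, xs) \<in> Dom n k" and j: "j < n" and nj: "t j \<notin> set xs"
  shows "col_sum (Phi n t xs) j = Suc k"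
proof -
  note DD = Dom_D[OF D]
  have tj: "t j < n" using perm_in[OF DD(1) j] .
  have "{i. i < n \<and> R xs i (t j)} = insert (t j) (set xs)"
    using nj tj DD(4) unfolding R_def heavy_le_def by auto
  then show ?thesis using col_sum_Phi_aux[OF j] nj DD by (simp add: distinct_card)
qed

lemma col_sum_heavy:
  assumes D: "(t, xs) \<in> Dom n k" and j: "j < n" and b: "b < k" and tj: "t j = xs!b"
  shows "col_sum (Phi n t xs) j = Suc b"
proof -
  note DD = Dom_D[OF D]
  have "\<And>i. R xs i (xs!b) \<longleftrightarrow> (\<exists>a. a \<le> b \<and> i = xs!a)"
    unfolding R_def using heavy_le_nth2[OF DD(3), of b] b DD(2) by (auto dest: nth_mem)
  then have "{i. i < n \<and> R xs i (t j)} = (!) xs ` {..b}"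
    using tj DD(4) DD(2) b by auto (meson le_less_trans nth_mem subsetD lessThan_iff)
  moreover have "card ((!) xs ` {..b}) = Suc b"
    using card_nth_image[OF DD(3), of "{..b}"] DD(2) b by (simp add: subset_eq)
  ultimately show ?thesis using col_sum_Phi_aux[OF j] by simp
qed

lemma mset_split:
  assumes d: "distinct xs" and sub: "set xs \<subseteq> {..<n}" and len: "length xs = k"
    and fh: "\<And>a. a < k \<Longrightarrow> f (xs!a) = g a"
    and fl: "\<And>i. i < n \<Longrightarrow> i \<notin> set xs \<Longrightarrow> f i = c"
  shows "mset (map f [0..<n]) = mset (map g [0..<k]) + replicate_mset (n - k) c"
proof -
  have kn: "k \<le> n" using sub d len by (metis card_lessThan card_mono distinct_card finite_lessThan)
  have "mset (map f [0..<n]) = image_mset f (mset_set {..<n})"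
    by (metis atLeast_upt mset_map mset_set_set distinct_upt set_upt lessThan_atLeast0)
  also have "{..<n} = set xs \<union> ({..<n} - set xs)" using sub by auto
  also have "mset_set (set xs \<union> ({..<n} - set xs)) = mset_set (set xs) + mset_set ({..<n} - set xs)"
    by (rule mset_set_Union) auto
  also have "image_mset f (mset_set (set xs) + mset_set ({..<n} - set xs))
     = image_mset f (mset xs) + image_mset f (mset_set ({..<n} - set xs))"
    using d by (simp add: mset_set_set)
  also have "image_mset f (mset xs) = mset (map g [0..<k])"
  proof -
    have "xs = map ((!) xs) [0..<k]" using len map_nth[of xs] by simp
    then have "image_mset f (mset xs) = mset (map (f \<circ> (!) xs) [0..<k])" by (metis mset_map map_map)
    also have "map (f \<circ> (!) xs) [0..<k] = map g [0..<k]" using fh by auto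
    finally show ?thesis .
  qed
  also have "image_mset f (mset_set ({..<n} - set xs)) = image_mset (\<lambda>_. c) (mset_set ({..<n} - set xs))"
    using fl by (intro image_mset_cong) auto
  also have "\<dots> = replicate_mset (n - k) c"
    using sub d len by (simp add: card_Diff_subset distinct_card image_mset_const_eq)
  finally show ?thesis .
qed

lemma rev_sort_eq:
  assumes "mset l = mset target" and "sorted (rev target)"
  shows "rev (sort l) = target"
proof -
  have "sort l = rev target" using assms by (intro properties_for_sort) auto
  then show ?thesis by simp
qed

lemma eta_Phi:
  assumes D: "(t, xs) \<in> Dom n k"
  shows "eta (Phi n t xs) = map (\<lambda>i. n - i) [0..<k] @ replicate (n - k) 1"
proof -
  note DD = Dom_D[OF D]
  have "mset (map (row_sum (Phi n t xs)) [0..<n]) = mset (map (\<lambda>i. n - i) [0..<k]) + replicate_mset (n - k) 1"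
    by (rule mset_split[OF DD(3) DD(4) DD(2)]) (auto intro: row_sum_heavy[OF D] simp: row_sum_light[OF D])
  moreover have "sorted (rev (map (\<lambda>i. n - i) [0..<k] @ replicate (n - k) 1))"
    using DD(5) unfolding sorted_rev_iff_nth_mono by (auto simp: nth_append)
  ultimately show ?thesis unfolding eta_def by (intro rev_sort_eq) auto
qed

lemma mset_perm_map:
  fixes s :: "nat \<Rightarrow> nat"
  assumes s: "s permutes {..<n}"
  shows "mset (map f [0..<n]) = mset (map (f \<circ> s) [0..<n])"
proof -
  have e: "\<And>g. mset (map g [0..<n]) = image_mset g (mset_set {..<n})"
    by (metis atLeast_upt mset_map mset_set_set distinct_upt set_upt lessThan_atLeast0)
  have "image_mset (f \<circ> s) (mset_set {..<n}) = image_mset f (image_mset s (mset_set {..<n}))"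
    by (simp add: multiset.map_comp)
  also have "image_mset s (mset_set {..<n}) = mset_set (s ` {..<n})"
    using s by (intro image_mset_mset_set) (meson permutes_inj inj_on_subset subset_UNIV)
  also have "s ` {..<n} = {..<n}" using s by (rule permutes_image)
  finally show ?thesis using e by metis
qed

lemma theta_Phi:
  assumes D: "(t, xs) \<in> Dom n k"
  shows "theta (Phi n t xs) = replicate (n - k) (k + 1) @ map (\<lambda>i. k - i) [0..<k]"
proof -
  note DD = Dom_D[OF D]
  have t': "iv t permutes {..<n}" using DD(1) by (rule permutes_inv)
  have tt: "\<And>x. t (iv t x) = x" using DD(1) by (meson permutes_inverses(1))
  have "mset (map (col_sum (Phi n t xs)) [0..<n]) = mset (map (col_sum (Phi n t xs) \<circ> iv t) [0..<n])"
    by (rule mset_perm_map[OF t'])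
  also have "\<dots> = mset (map Suc [0..<k]) + replicate_mset (n - k) (Suc k)"
  proof (rule mset_split[OF DD(3) DD(4) DD(2)])
    fix a assume a: "a < k"
    have "xs ! a < n" using a DD(2) DD(4) nth_mem by blast
    then show "(col_sum (Phi n t xs) \<circ> iv t) (xs ! a) = Suc a"
      using col_sum_heavy[OF D perm_inv_in[OF DD(1)] a] tt by simp
  next
    fix i assume "i < n" "i \<notin> set xs"
    then show "(col_sum (Phi n t xs) \<circ> iv t) i = Suc k"
      using col_sum_light[OF D perm_inv_in[OF DD(1)]] tt by simp
  qed
  also have "\<dots> = mset (replicate (n - k) (k + 1) @ map (\<lambda>i. k - i) [0..<k])"
  proof -
    have "map (\<lambda>i. k - i) [0..<k] = rev (map Suc [0..<k])"
      by (rule nth_equalityI) (auto simp: rev_nth)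
    then show ?thesis by simp
  qed
  finally have m: "mset (map (col_sum (Phi n t xs)) [0..<n]) = mset (replicate (n - k) (k + 1) @ map (\<lambda>i. k - i) [0..<k])" .
  have "sorted (rev (replicate (n - k) (k + 1) @ map (\<lambda>i. k - i) [0..<k]))"
    unfolding sorted_rev_iff_nth_mono by (auto simp: nth_append)
  then show ?thesis unfolding theta_def using m by (intro rev_sort_eq) auto
qed

lemma Phi0_invertible:
  "invertible_mat (Phi n id [0..<k])"
proof -
  have ut: "upper_triangular (Phi n id [0..<k])"
  proof (rule upper_triangularI)
    fix i j assume ji: "j < i" and i: "i < dim_row (Phi n id [0..<k])"
    then have "\<not> R [0..<k] i j" unfolding R_def heavy_le_def by auto
    then show "Phi n id [0..<k] $$ (i, j) = 0" using Phi_entry[of i n j id] ji i by simp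
  qed
  have "det (Phi n id [0..<k]) = prod_list (diag_mat (Phi n id [0..<k]))"
    by (rule det_upper_triangular[OF ut Phi_carrier])
  also have "\<dots> = (\<Prod>i = 0..<n. Phi n id [0..<k] $$ (i,i))" by (simp add: prod_list_diag_prod)
  also have "\<dots> = 1" by (rule prod.neutral) (auto simp: Phi_entry R_def)
  finally have "det (Phi n id [0..<k]) \<noteq> 0" by simp
  from det_imp_inv[OF Phi_carrier this] obtain B where "B \<in> carrier_mat n n"
    "Phi n id [0..<k] * B = 1\<^sub>m n" "B * Phi n id [0..<k] = 1\<^sub>m n" by blast
  then show ?thesis by (intro invertible_I[OF Phi_carrier]) auto
qed

lemma act_invertible:
  assumes p: "p permutes {..<n}" and s: "s permutes {..<n}" and B: "B \<in> carrier_mat n n"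
    and inv: "invertible_mat B"
  shows "invertible_mat (act n p s B)"
proof -
  obtain B' where e1: "B * B' = 1\<^sub>m n" and e2: "B' * B = 1\<^sub>m (dim_row B')"
    using inv B unfolding invertible_mat_def inverts_mat_def by auto
  have "dim_col B' = n" using e1 by (metis index_mult_mat(3) index_one_mat(3))
  moreover have "dim_row B' = n" using e2 B by (metis carrier_matD(2) index_mult_mat(3) index_one_mat(3))
  ultimately have B': "B' \<in> carrier_mat n n" by auto
  then have e2: "B' * B = 1\<^sub>m n" using e2 by auto
  have s': "iv s permutes {..<n}" and p': "iv p permutes {..<n}" using p s by (auto intro: permutes_inv)
  have ss: "iv (iv s) = s" and pp: "iv (iv p) = p" using p s by (auto intro: inv_inv_eq permutes_bij)
  have c1: "perm_mat n p * perm_mat n (iv p) = 1\<^sub>m n" by (rule perm_mat_inv_mult[OF p])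
  have c2: "perm_mat n (iv p) * perm_mat n p = 1\<^sub>m n" using perm_mat_inv_mult[OF p'] pp by simp
  have c3: "perm_mat n s * perm_mat n (iv s) = 1\<^sub>m n" by (rule perm_mat_inv_mult[OF s])
  have c4: "perm_mat n (iv s) * perm_mat n s = 1\<^sub>m n" using perm_mat_inv_mult[OF s'] ss by simp
  let ?C = "perm_mat n s * B' * perm_mat n (iv p)"
  have "act n p s B * ?C = 1\<^sub>m n" unfolding act_def
    by (rule inv_prod3[OF perm_mat_carrier B perm_mat_carrier perm_mat_carrier B' perm_mat_carrier c1 e1 c4])
  moreover have "?C * act n p s B = 1\<^sub>m n" unfolding act_def
    by (rule inv_prod3[OF perm_mat_carrier B' perm_mat_carrier perm_mat_carrier B perm_mat_carrier c3 e2 c2])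
  moreover have "?C \<in> carrier_mat n n" using B' by (metis mult_carrier_mat perm_mat_carrier)
  ultimately show ?thesis by (intro invertible_I[OF act_carrier[OF B]])
qed

lemma ext_perm:
  assumes d: "distinct xs" and sub: "set xs \<subseteq> {..<n}" and len: "length xs = k"
  shows "\<exists>p. p permutes {..<n} \<and> map p [0..<k] = xs"
proof -
  define ys where "ys = xs @ sorted_list_of_set ({..<n} - set xs)"
  have dys: "distinct ys" using d unfolding ys_def by auto
  have sys: "set ys = {..<n}" using sub unfolding ys_def by auto
  have lys: "length ys = n" using dys sys by (metis card_lessThan distinct_card)
  define p where "p = (\<lambda>a. if a < n then ys!a else a)"
  have "bij_betw ((!) ys) {..<n} {..<n}" using bij_betw_nth[OF dys] lys sys by simp
  then have b: "bij_betw p {..<n} {..<n}" unfolding p_def by (rule bij_betw_cong[THEN iffD1, rotated]) auto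
  have "\<And>x. x \<notin> {..<n} \<Longrightarrow> p x = x" by (simp add: p_def)
  then have pp: "p permutes {..<n}" by (rule bij_imp_permutes[OF b])
  have kn: "k \<le> n" using lys len unfolding ys_def by simp
  have "map p [0..<k] = xs"
    by (rule nth_equalityI) (use len kn in \<open>auto simp: p_def ys_def nth_append\<close>)
  then show ?thesis using pp by blast
qed

lemma Phi_in_H:
  assumes D: "(t, xs) \<in> Dom n k"
  shows "Phi n t xs \<in> H n k"
proof -
  note DD = Dom_D[OF D]
  obtain p where p: "p permutes {..<n}" and mp: "map p [0..<k] = xs" using ext_perm[OF DD(3) DD(4) DD(2)] by blast
  define s where "s = iv t \<circ> p"
  have s: "s permutes {..<n}" unfolding s_def using p DD(1) by (intro permutes_compose permutes_inv)
  have "iv s = iv p \<circ> iv (iv t)" unfolding s_def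
    using p DD(1) by (intro o_inv_distrib) (auto intro: permutes_bij permutes_inv)
  also have "iv (iv t) = t" using DD(1) by (intro inv_inv_eq permutes_bij)
  finally have "p \<circ> id \<circ> iv s = t" using p
    by (auto simp: fun_eq_iff)
  then have "act n p s (Phi n id [0..<k]) = Phi n t xs" using Phi_equivariant[OF p s] mp by simp
  then have "invertible_mat (Phi n t xs)" using act_invertible[OF p s Phi_carrier Phi0_invertible] by metis
  then show ?thesis unfolding H_def GL2_def using eta_Phi[OF D] theta_Phi[OF D] by auto
qed

lemma R_refl: "R xs m m" unfolding R_def by simp

lemma R_antisym:
  assumes d: "distinct xs" and r1: "R xs m m'" and r2: "R xs m' m"
  shows "m = m'"
proof (rule ccontr)
  assume ne: "m \<noteq> m'"
  have h1: "heavy_le xs m m'"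
    using r1 r2 ne unfolding R_def heavy_le_def by auto
  have h2: "heavy_le xs m' m"
    using r1 r2 ne unfolding R_def heavy_le_def by auto
  from h1 obtain a b where ab: "a \<le> b" "b < length xs" "m = xs!a" "m' = xs!b" unfolding heavy_le_def by blast
  from h2 obtain a' b' where ab': "a' \<le> b'" "b' < length xs" "m' = xs!a'" "m = xs!b'" unfolding heavy_le_def by blast
  have "a = b'" using ab ab' d by (metis le_less_trans nth_eq_iff_index_eq)
  moreover have "b = a'" using ab ab' d by (metis le_less_trans nth_eq_iff_index_eq)
  ultimately have "a = b" using ab ab' by simp
  then show False using ab ne by simp
qed

lemma Phi_inj:
  assumes D: "(t, xs) \<in> Dom n k" and D': "(t', xs') \<in> Dom n k"
    and eq: "Phi n t xs = Phi n t' xs'"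
  shows "t = t' \<and> xs = xs'"
proof -
  note DD = Dom_D[OF D] and DD' = Dom_D[OF D']
  have xs_eq: "xs' = xs"
  proof (rule nth_equalityI)
    show "length xs' = length xs" using DD DD' by simp
    fix a assume a: "a < length xs'"
    then have ak: "a < k" using DD' by simp
    have x'n: "xs'!a < n" using a DD'(4) nth_mem by blast
    have rs: "row_sum (Phi n t xs) (xs'!a) = n - a" using row_sum_heavy[OF D' ak] eq by simp
    show "xs'!a = xs!a"
    proof (cases "xs'!a \<in> set xs")
      case True
      then obtain b where b: "b < length xs" "xs'!a = xs!b" by (metis in_set_conv_nth)
      then have "n - b = n - a" using row_sum_heavy[OF D, of b] rs DD(2) by simp
      then have "a = b" using ak b DD DD(5) by simp
      then show ?thesis using b by simp
    next
      case False
      then have "n - a = 1" using row_sum_light[OF D x'n] rs by simp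
      then have kn: "k = n" using ak DD(5) by simp
      have "set xs = {..<n}"
        using DD by (intro card_subset_eq) (auto simp: distinct_card kn)
      then show ?thesis using False x'n by auto
    qed
  qed
  have "t j = t' j" for j
  proof (cases "j < n")
    case True
    have "\<And>i. i < n \<Longrightarrow> R xs i (t j) \<longleftrightarrow> R xs i (t' j)"
      using Phi_entry1[OF _ True, of _ t xs] Phi_entry1[OF _ True, of _ t' xs] eq xs_eq by metis
    then have "R xs (t j) (t' j)" "R xs (t' j) (t j)"
      using R_refl perm_in[OF DD(1) True] perm_in[OF DD'(1) True] by blast+
    then show ?thesis using R_antisym[OF DD(3)] by blast
  next
    case False
    then show ?thesis using DD(1) DD'(1) by (simp add: permutes_not_in)
  qed
  then show ?thesis using xs_eq by auto
qed

lemma count_mset_map_upt: "count (mset (map f [0..<n])) v = card {i. i < n \<and> f i = v}"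
proof -
  have "count (mset (map f [0..<n])) v = length (filter (\<lambda>i. v = f i) [0..<n])"
  proof -
    have cl: "count_list ys v = length (filter (\<lambda>y. v = y) ys)" for ys :: "'a list"
      by (induction ys) auto
    show ?thesis by (simp only: count_mset cl filter_map length_map o_def)
  qed
  also have "\<dots> = card ({i. v = f i} \<inter> set [0..<n])" by (rule distinct_length_filter) simp
  also have "{i. v = f i} \<inter> set [0..<n] = {i. i < n \<and> f i = v}" by auto
  finally show ?thesis .
qed

lemma staircase:
  fixes M :: "nat \<Rightarrow> nat \<Rightarrow> bool"
  assumes rows: "\<And>a. a < k \<Longrightarrow> card {b. b < k \<and> M a b} = k - a"
    and cols: "\<And>b. b < k \<Longrightarrow> card {a. a < k \<and> M a b} = Suc b"
  shows "a < k \<Longrightarrow> b < k \<Longrightarrow> M a b \<longleftrightarrow> a \<le> b"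
proof (induction a arbitrary: b rule: less_induct)
  case (less a)
  note ak = less.prems(1) and bk = less.prems(2)
  have zero: "\<not> M a b'" if b'a: "b' < a" for b'
  proof -
    have b'k: "b' < k" using b'a ak by simp
    have sub: "{..b'} \<subseteq> {a'. a' < k \<and> M a' b'}"
    proof
      fix a' assume "a' \<in> {..b'}"
      then have "a' \<le> b'" by simp
      then show "a' \<in> {a'. a' < k \<and> M a' b'}" using less.IH[of a' b'] b'a b'k by simp
    qed
    have fin: "finite {a'. a' < k \<and> M a' b'}" by (rule finite_subset[of _ "{..<k}"]) auto
    have c: "card {..b'} = card {a'. a' < k \<and> M a' b'}" using cols[OF b'k] by simp
    have "{..b'} = {a'. a' < k \<and> M a' b'}" by (rule card_subset_eq[OF fin sub c])
    moreover have "a \<notin> {..b'}" using b'a by simp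
    ultimately have "a \<notin> {a'. a' < k \<and> M a' b'}" by blast
    then show ?thesis using ak by simp
  qed
  have sub: "{b. b < k \<and> M a b} \<subseteq> {a..<k}"
  proof
    fix b assume b: "b \<in> {b. b < k \<and> M a b}"
    then have "\<not> b < a" using zero by blast
    then show "b \<in> {a..<k}" using b by simp
  qed
  have c: "card {b. b < k \<and> M a b} = card {a..<k}" using rows[OF ak] by simp
  have eq: "{b. b < k \<and> M a b} = {a..<k}" by (rule card_subset_eq[OF finite_atLeastLessThan sub c])
  have "M a b \<longleftrightarrow> b \<in> {b. b < k \<and> M a b}" using bk by simp
  also have "\<dots> \<longleftrightarrow> b \<in> {a..<k}" by (simp only: eq)
  also have "\<dots> \<longleftrightarrow> a \<le> b" using bk by simp
  finally show ?case .
qed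

lemma inv_rows_distinct:
  fixes A :: "bit mat"
  assumes A: "A \<in> carrier_mat n n" and inv: "invertible_mat A" and i: "i < n" "i' < n" "i \<noteq> i'"
    and eq: "\<And>j. j < n \<Longrightarrow> A $$ (i,j) = A $$ (i',j)"
  shows False
proof -
  obtain B where AB: "A * B = 1\<^sub>m n" using inv A unfolding invertible_mat_def inverts_mat_def by auto
  have dB: "dim_col B = n" using AB by (metis index_mult_mat(3) index_one_mat(3))
  have "row A i = row A i'" using eq A i by (intro eq_vecI) auto
  then have "(A * B) $$ (i,i) = (A * B) $$ (i',i)" using A i dB by (simp add: index_mult_mat)
  then show False using AB i by simp
qed

lemma R_nth:
  assumes d: "distinct xs" and b: "b < length xs"
  shows "R xs i (xs!b) \<longleftrightarrow> (\<exists>a. a \<le> b \<and> i = xs!a)"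
proof -
  have m: "xs!b \<in> set xs" using b by simp
  show ?thesis unfolding R_def heavy_le_nth2[OF d b] using m by blast
qed

locale HA =
  fixes n k :: nat and A :: "bit mat"
  assumes kn: "k \<le> n" and AH: "A \<in> H n k"
begin

lemma A_carrier: "A \<in> carrier_mat n n" and A_inv: "invertible_mat A"
  and A_eta: "eta A = map (\<lambda>i. n - i) [0..<k] @ replicate (n - k) 1"
  and A_theta: "theta A = replicate (n - k) (k + 1) @ map (\<lambda>i. k - i) [0..<k]"
  using AH unfolding H_def GL2_def by auto

lemma A_dims[simp]: "dim_row A = n" "dim_col A = n" using A_carrier by auto

lemma A_ne1: "A $$ (i,j) \<noteq> 1 \<longleftrightarrow> A $$ (i,j) = 0" by simp

lemma mset_rows: "mset (map (row_sum A) [0..<n]) = mset (map (\<lambda>i. n - i) [0..<k] @ replicate (n - k) 1)"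
proof -
  have "mset (rev (sort (map (row_sum A) [0..<n]))) = mset (map (\<lambda>i. n - i) [0..<k] @ replicate (n - k) 1)"
    using A_eta unfolding eta_def by simp
  then show ?thesis by simp
qed

lemma mset_cols: "mset (map (col_sum A) [0..<n]) = mset (replicate (n - k) (k + 1) @ map (\<lambda>i. k - i) [0..<k])"
proof -
  have "mset (rev (sort (map (col_sum A) [0..<n]))) = mset (replicate (n - k) (k + 1) @ map (\<lambda>i. k - i) [0..<k])"
    using A_theta unfolding theta_def by simp
  then show ?thesis by simp
qed

lemma row_unique: assumes a: "a < k" shows "card {i. i < n \<and> row_sum A i = n - a} = 1"
proof -
  have "card {i. i < n \<and> row_sum A i = n - a} = count (mset (map (row_sum A) [0..<n])) (n - a)"
    by (rule count_mset_map_upt[symmetric])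
  also have "\<dots> = count (mset (map (\<lambda>i. n - i) [0..<k])) (n - a) + count (replicate_mset (n - k) 1) (n - a)"
    unfolding mset_rows by simp
  also have "count (mset (map (\<lambda>i. n - i) [0..<k])) (n - a) = card {i. i < k \<and> n - i = n - a}"
    by (rule count_mset_map_upt)
  also have "{i. i < k \<and> n - i = n - a} = {a}" using a kn by auto
  also have "count (replicate_mset (n - k) 1) (n - a) = 0" using a kn by auto
  finally show ?thesis by simp
qed

lemma row_other: assumes i: "i < n" and ne: "\<And>a. a < k \<Longrightarrow> row_sum A i \<noteq> n - a" shows "row_sum A i = 1"
proof -
  have "row_sum A i \<in> set (map (row_sum A) [0..<n])" using i by simp
  also have "set (map (row_sum A) [0..<n]) = set (map (\<lambda>i. n - i) [0..<k] @ replicate (n - k) 1)"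
    using mset_rows by (metis set_mset_mset)
  finally have "row_sum A i \<in> set (map (\<lambda>i. n - i) [0..<k]) \<or> row_sum A i \<in> set (replicate (n - k) 1)"
    by (simp only: set_append Un_iff)
  then show ?thesis
  proof
    assume "row_sum A i \<in> set (map (\<lambda>i. n - i) [0..<k])"
    then obtain a where "a < k" "row_sum A i = n - a" by auto
    then show ?thesis using ne by blast
  qed (simp add: in_set_replicate)
qed

lemma col_unique: assumes b: "b < k" shows "card {j. j < n \<and> col_sum A j = Suc b} = 1"
proof -
  have "card {j. j < n \<and> col_sum A j = Suc b} = count (mset (map (col_sum A) [0..<n])) (Suc b)"
    by (rule count_mset_map_upt[symmetric])
  also have "\<dots> = count (replicate_mset (n - k) (k + 1)) (Suc b) + count (mset (map (\<lambda>i. k - i) [0..<k])) (Suc b)"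
    unfolding mset_cols by simp
  also have "count (mset (map (\<lambda>i. k - i) [0..<k])) (Suc b) = card {i. i < k \<and> k - i = Suc b}"
    by (rule count_mset_map_upt)
  also have "{i. i < k \<and> k - i = Suc b} = {k - Suc b}" using b by auto
  also have "count (replicate_mset (n - k) (k + 1)) (Suc b) = 0" using b by auto
  finally show ?thesis by simp
qed

lemma col_other: assumes j: "j < n" and ne: "\<And>b. b < k \<Longrightarrow> col_sum A j \<noteq> Suc b" shows "col_sum A j = Suc k"
proof -
  have "col_sum A j \<in> set (map (col_sum A) [0..<n])" using j by simp
  also have "set (map (col_sum A) [0..<n]) = set (replicate (n - k) (k + 1) @ map (\<lambda>i. k - i) [0..<k])"
    using mset_cols by (metis set_mset_mset)
  finally have "col_sum A j \<in> set (replicate (n - k) (k + 1) @ map (\<lambda>i. k - i) [0..<k])" .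
  then have "col_sum A j \<in> set (replicate (n - k) (k + 1)) \<or> col_sum A j \<in> set (map (\<lambda>i. k - i) [0..<k])"
    by (simp only: set_append Un_iff)
  then show ?thesis
  proof
    assume "col_sum A j \<in> set (map (\<lambda>i. k - i) [0..<k])"
    then obtain i where "i < k" "col_sum A j = k - i" by auto
    then show ?thesis using ne[of "k - Suc i"] by simp
  qed (simp add: in_set_replicate)
qed

definition r :: "nat \<Rightarrow> nat" where "r a = (THE i. i < n \<and> row_sum A i = n - a)"

lemma r_prop: assumes a: "a < k" shows "r a < n" "row_sum A (r a) = n - a"
  "\<And>i. i < n \<Longrightarrow> row_sum A i = n - a \<Longrightarrow> i = r a"
proof -
  obtain x where x: "{i. i < n \<and> row_sum A i = n - a} = {x}" using row_unique[OF a] by (rule card_1_singletonE)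
  have "r a = x" unfolding r_def using x by (metis (mono_tags, lifting) mem_Collect_eq singletonD singletonI the_equality)
  then show "r a < n" "row_sum A (r a) = n - a" "\<And>i. i < n \<Longrightarrow> row_sum A i = n - a \<Longrightarrow> i = r a"
    using x by auto
qed

definition xs :: "nat list" where "xs = map r [0..<k]"

lemma xs_len[simp]: "length xs = k" unfolding xs_def by simp
lemma xs_nth: "a < k \<Longrightarrow> xs ! a = r a" unfolding xs_def by simp
lemma xs_sub: "set xs \<subseteq> {..<n}" unfolding xs_def using r_prop(1) by auto
lemma xs_dist: "distinct xs"
  unfolding xs_def distinct_map
proof
  show "inj_on r (set [0..<k])"
  proof (rule inj_onI)
    fix a a' assume "a \<in> set [0..<k]" "a' \<in> set [0..<k]" "r a = r a'"
    then show "a = a'" using r_prop(2)[of a] r_prop(2)[of a'] kn by auto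
  qed
qed simp
lemma heavy_rs: "a < k \<Longrightarrow> row_sum A (xs!a) = n - a" using xs_nth r_prop(2) by simp
lemma light_rs: assumes i: "i < n" and ni: "i \<notin> set xs" shows "row_sum A i = 1"
proof (rule row_other[OF i])
  fix a assume a: "a < k"
  show "row_sum A i \<noteq> n - a"
  proof
    assume "row_sum A i = n - a"
    then have "i = r a" using r_prop(3)[OF a i] by simp
    then show False using ni a xs_nth by (metis nth_mem xs_len)
  qed
qed

definition dl :: "nat \<Rightarrow> nat" where "dl b = (THE j. j < n \<and> col_sum A j = Suc b)"

lemma dl_prop: assumes b: "b < k" shows "dl b < n" "col_sum A (dl b) = Suc b"
  "\<And>j. j < n \<Longrightarrow> col_sum A j = Suc b \<Longrightarrow> j = dl b"
proof -
  obtain x where x: "{j. j < n \<and> col_sum A j = Suc b} = {x}" using col_unique[OF b] by (rule card_1_singletonE)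
  have "dl b = x" unfolding dl_def using x by (metis (mono_tags, lifting) mem_Collect_eq singletonD singletonI the_equality)
  then show "dl b < n" "col_sum A (dl b) = Suc b" "\<And>j. j < n \<Longrightarrow> col_sum A j = Suc b \<Longrightarrow> j = dl b"
    using x by auto
qed

end

context HA begin

definition c :: "nat \<Rightarrow> nat" where "c i = (THE j. j < n \<and> A $$ (i,j) = 1)"

lemma c_prop: assumes i: "i < n" and ni: "i \<notin> set xs"
  shows "c i < n" "A $$ (i, c i) = 1" "\<And>j. j < n \<Longrightarrow> A $$ (i,j) = 1 \<Longrightarrow> j = c i"
proof -
  have "card {j. j < n \<and> A $$ (i,j) = 1} = 1" using light_rs[OF i ni] unfolding row_sum_def by simp
  then obtain x where x: "{j. j < n \<and> A $$ (i,j) = 1} = {x}" by (rule card_1_singletonE)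
  have "c i = x" unfolding c_def
  proof (rule the_equality)
    show "x < n \<and> A $$ (i, x) = 1" using x by blast
    show "\<And>j. j < n \<and> A $$ (i, j) = 1 \<Longrightarrow> j = x" using x by blast
  qed
  then show "c i < n" "A $$ (i, c i) = 1" "\<And>j. j < n \<Longrightarrow> A $$ (i,j) = 1 \<Longrightarrow> j = c i"
    using x by blast+
qed

definition L :: "nat set" where "L = {i. i < n \<and> i \<notin> set xs}"
definition C :: "nat set" where "C = c ` L"
definition Sp :: "nat set" where "Sp = dl ` {..<k}"

lemma c_inj: "inj_on c L"
proof (rule inj_onI)
  fix i i' assume i: "i \<in> L" and i': "i' \<in> L" and e: "c i = c i'"
  show "i = i'"
  proof (rule ccontr)
    assume ne: "i \<noteq> i'"
    have "A $$ (i,j) = A $$ (i',j)" if j: "j < n" for j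
    proof (cases "A $$ (i,j) = 1")
      case True
      then have "j = c i" using c_prop(3)[of i j] i j unfolding L_def by blast
      then show ?thesis using True c_prop(2)[of i'] i' e unfolding L_def by auto
    next
      case False
      have "A $$ (i',j) \<noteq> 1"
      proof
        assume "A $$ (i',j) = 1"
        then have "j = c i'" using c_prop(3)[of i' j] i' j unfolding L_def by blast
        then show False using False c_prop(2)[of i] i e unfolding L_def by auto
      qed
      then show ?thesis using False by simp
    qed
    then show False using inv_rows_distinct[OF A_carrier A_inv _ _ ne] i i' unfolding L_def by blast
  qed
qed

lemma L_sub: "L \<subseteq> {..<n}" unfolding L_def by auto
lemma card_L: "card L = n - k"
proof -
  have "L = {..<n} - set xs" unfolding L_def by auto
  then show ?thesis using xs_sub xs_dist by (simp add: card_Diff_subset distinct_card)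
qed
lemma card_C: "card C = n - k" unfolding C_def using c_inj card_L by (simp add: card_image)
lemma C_sub: "C \<subseteq> {..<n}" unfolding C_def L_def using c_prop(1) by auto
lemma dl_inj: "inj_on dl {..<k}"
  by (rule inj_onI) (metis dl_prop(2) lessThan_iff nat.inject)
lemma card_Sp: "card Sp = k" unfolding Sp_def using dl_inj by (simp add: card_image)
lemma Sp_sub: "Sp \<subseteq> {..<n}" unfolding Sp_def using dl_prop(1) by auto

lemma col_heavy_only: assumes j: "j < n" "j \<notin> C" and i: "i < n" and a: "A $$ (i,j) = 1"
  shows "i \<in> set xs"
proof (rule ccontr)
  assume ni: "i \<notin> set xs"
  have "j = c i" by (rule c_prop(3)[OF i ni j(1) a])
  moreover have "i \<in> L" using i ni unfolding L_def by simp
  ultimately show False using j(2) unfolding C_def by simp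
qed

lemma notC_Sp: assumes j: "j < n" "j \<notin> C" shows "j \<in> Sp"
proof -
  have "{i. i < n \<and> A $$ (i,j) = 1} \<subseteq> set xs" using col_heavy_only[OF j] by auto
  then have "card {i. i < n \<and> A $$ (i,j) = 1} \<le> card (set xs)" by (intro card_mono) auto
  then have le: "col_sum A j \<le> k" unfolding col_sum_def using xs_dist by (simp add: distinct_card)
  have "\<exists>b<k. col_sum A j = Suc b"
  proof (rule ccontr)
    assume "\<not> (\<exists>b<k. col_sum A j = Suc b)"
    then have "col_sum A j = Suc k" using col_other[OF j(1)] by blast
    then show False using le by simp
  qed
  then obtain b where "b < k" "col_sum A j = Suc b" by blast
  then have "j = dl b" using dl_prop(3) j(1) by blast
  then show ?thesis unfolding Sp_def using \<open>b < k\<close> by simp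
qed

lemma Sp_eq: "Sp = {..<n} - C"
proof -
  have sub: "{..<n} - C \<subseteq> Sp" using notC_Sp by auto
  have fC: "finite C" using C_sub finite_subset by blast
  have "card ({..<n} - C) = k" using C_sub card_C kn by (simp add: card_Diff_subset[OF fC C_sub])
  then have "{..<n} - C = Sp" using card_Sp
    by (intro card_subset_eq[OF _ sub]) (auto simp: Sp_def)
  then show ?thesis by simp
qed

lemma C_col: assumes i: "i \<in> L" shows "{i'. i' < n \<and> A $$ (i', c i) = 1} = insert i (set xs)"
proof -
  have i': "i < n" "i \<notin> set xs" using i unfolding L_def by auto
  have cC: "c i \<in> C" using i unfolding C_def by simp
  have cn: "c i < n" using c_prop(1)[OF i'] .
  have sub: "{i'. i' < n \<and> A $$ (i', c i) = 1} \<subseteq> insert i (set xs)"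
  proof
    fix i0 assume "i0 \<in> {i'. i' < n \<and> A $$ (i', c i) = 1}"
    then have i0: "i0 < n" "A $$ (i0, c i) = 1" by auto
    show "i0 \<in> insert i (set xs)"
    proof (cases "i0 \<in> set xs")
      case False
      have "c i = c i0" by (rule c_prop(3)[OF i0(1) False cn i0(2)])
      moreover have "i0 \<in> L" using i0 False unfolding L_def by simp
      ultimately have "i0 = i" using inj_onD[OF c_inj, of i i0] i by simp
      then show ?thesis by simp
    qed simp
  qed
  have "c i \<notin> Sp" using cC Sp_eq by simp
  then have "\<forall>b<k. col_sum A (c i) \<noteq> Suc b" using dl_prop(3)[OF _ cn] unfolding Sp_def by blast
  then have cs: "col_sum A (c i) = Suc k" using col_other[OF cn] by blast
  have "card {i'. i' < n \<and> A $$ (i', c i) = 1} = card (insert i (set xs))"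
    using cs i'(2) xs_dist unfolding col_sum_def by (simp add: distinct_card)
  then show ?thesis by (intro card_subset_eq[OF _ sub]) auto
qed

lemma heavy_C: assumes a: "a < k" and j: "j \<in> C" shows "A $$ (xs!a, j) = 1"
proof -
  obtain i where i: "i \<in> L" and ji: "j = c i" using j unfolding C_def by auto
  have "xs!a \<in> insert i (set xs)" using a by simp
  then show ?thesis using C_col[OF i] ji by blast
qed

definition M :: "nat \<Rightarrow> nat \<Rightarrow> bool" where "M a b \<longleftrightarrow> A $$ (xs!a, dl b) = 1"

lemma M_rows: assumes a: "a < k" shows "card {b. b < k \<and> M a b} = k - a"
proof -
  define Ob where "Ob = {j. j < n \<and> A $$ (xs!a, j) = 1}"
  have cOb: "card Ob = n - a" using heavy_rs[OF a] unfolding row_sum_def Ob_def by simp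
  have Obeq: "Ob = C \<union> dl ` {b. b < k \<and> M a b}"
  proof
    show "Ob \<subseteq> C \<union> dl ` {b. b < k \<and> M a b}"
    proof
      fix j assume "j \<in> Ob"
      then have j: "j < n" "A $$ (xs!a, j) = 1" unfolding Ob_def by auto
      show "j \<in> C \<union> dl ` {b. b < k \<and> M a b}"
      proof (cases "j \<in> C")
        case False
        then have "j \<in> Sp" using notC_Sp j by blast
        then obtain b where "b < k" "j = dl b" unfolding Sp_def by auto
        then show ?thesis using j unfolding M_def by auto
      qed simp
    qed
    show "C \<union> dl ` {b. b < k \<and> M a b} \<subseteq> Ob"
      using heavy_C[OF a] C_sub dl_prop(1) unfolding Ob_def M_def by auto
  qed
  have disj: "C \<inter> dl ` {b. b < k \<and> M a b} = {}" using Sp_eq unfolding Sp_def by auto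
  have fC: "finite C" using C_sub finite_subset by blast
  have "card Ob = card C + card (dl ` {b. b < k \<and> M a b})"
    unfolding Obeq by (rule card_Un_disjoint[OF fC _ disj]) simp
  also have "card (dl ` {b. b < k \<and> M a b}) = card {b. b < k \<and> M a b}"
    using dl_inj by (intro card_image) (auto intro: inj_on_subset)
  finally show ?thesis using cOb card_C a kn by simp
qed

lemma M_cols: assumes b: "b < k" shows "card {a. a < k \<and> M a b} = Suc b"
proof -
  have dlC: "dl b \<notin> C" using Sp_eq b unfolding Sp_def by auto
  have dln: "dl b < n" using dl_prop(1)[OF b] .
  have eq: "{i. i < n \<and> A $$ (i, dl b) = 1} = (!) xs ` {a. a < k \<and> M a b}"
  proof
    show "{i. i < n \<and> A $$ (i, dl b) = 1} \<subseteq> (!) xs ` {a. a < k \<and> M a b}"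
    proof
      fix i assume "i \<in> {i. i < n \<and> A $$ (i, dl b) = 1}"
      then have i: "i < n" "A $$ (i, dl b) = 1" by auto
      then have "i \<in> set xs" using col_heavy_only[OF dln dlC] by blast
      then obtain a where "a < k" "i = xs!a" by (metis in_set_conv_nth xs_len)
      then show "i \<in> (!) xs ` {a. a < k \<and> M a b}" using i unfolding M_def by auto
    qed
    show "(!) xs ` {a. a < k \<and> M a b} \<subseteq> {i. i < n \<and> A $$ (i, dl b) = 1}"
      using xs_sub unfolding M_def by auto (metis nth_mem subsetD lessThan_iff xs_len)
  qed
  have "card {i. i < n \<and> A $$ (i, dl b) = 1} = Suc b" using dl_prop(2)[OF b] unfolding col_sum_def by simp
  moreover have "card ((!) xs ` {a. a < k \<and> M a b}) = card {a. a < k \<and> M a b}"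
    using card_nth_image[OF xs_dist, of "{a. a < k \<and> M a b}"] by auto
  ultimately show ?thesis using eq by simp
qed

lemma M_stair: "a < k \<Longrightarrow> b < k \<Longrightarrow> M a b \<longleftrightarrow> a \<le> b"
  by (rule staircase[OF M_rows M_cols])

definition tau :: "nat \<Rightarrow> nat" where
  "tau j = (if j \<in> C then the_inv_into L c j else if j \<in> Sp then xs ! (col_sum A j - 1) else j)"

lemma tau_dl: assumes b: "b < k" shows "tau (dl b) = xs!b"
proof -
  have "dl b \<in> Sp" "dl b \<notin> C" using b Sp_eq unfolding Sp_def by auto
  then show ?thesis unfolding tau_def using dl_prop(2)[OF b] by simp
qed

lemma tau_C: assumes j: "j \<in> C" shows "tau j \<in> L" "c (tau j) = j"
proof -
  have "tau j = the_inv_into L c j" unfolding tau_def using j by simp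
  then show "tau j \<in> L" "c (tau j) = j"
    using the_inv_into_into[OF c_inj, of j L] f_the_inv_into_f[OF c_inj, of j] j unfolding C_def by auto
qed

lemma tau_perm: "tau permutes {..<n}"
proof -
  have cases: "j \<in> C \<or> (\<exists>b<k. j = dl b)" if "j < n" for j
    using notC_Sp[OF that] unfolding Sp_def by auto
  have inj: "inj_on tau {..<n}"
  proof (rule inj_onI)
    fix j j' assume j: "j \<in> {..<n}" and j': "j' \<in> {..<n}" and e: "tau j = tau j'"
    show "j = j'"
    proof (cases "j \<in> C")
      case True
      show ?thesis
      proof (cases "j' \<in> C")
        case True
        then show ?thesis using tau_C \<open>j \<in> C\<close> e by metis
      next
        case False
        then obtain b' where b': "b' < k" "j' = dl b'" using cases j' by auto
        then have "tau j' \<in> set xs" using tau_dl by simp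
        moreover have "tau j \<notin> set xs" using tau_C(1)[OF True] unfolding L_def by simp
        ultimately show ?thesis using e by simp
      qed
    next
      case False
      then obtain b where b: "b < k" "j = dl b" using cases j by auto
      show ?thesis
      proof (cases "j' \<in> C")
        case True
        have "tau j \<in> set xs" using tau_dl b by simp
        moreover have "tau j' \<notin> set xs" using tau_C(1)[OF True] unfolding L_def by simp
        ultimately show ?thesis using e by simp
      next
        case False
        then obtain b' where b': "b' < k" "j' = dl b'" using cases j' by auto
        have "xs!b = xs!b'" using e b b' tau_dl by simp
        then have "b = b'" using b b' xs_dist by (simp add: nth_eq_iff_index_eq)
        then show ?thesis using b b' by simp
      qed
    qed
  qed
  have img: "tau ` {..<n} \<subseteq> {..<n}"
  proof
    fix y assume "y \<in> tau ` {..<n}"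
    then obtain j where j: "j < n" "y = tau j" by auto
    show "y \<in> {..<n}"
    proof (cases "j \<in> C")
      case True
      then show ?thesis using tau_C(1) j L_sub by auto
    next
      case False
      then obtain b where "b < k" "j = dl b" using cases j by auto
      then show ?thesis using tau_dl j xs_sub by (metis nth_mem subsetD xs_len)
    qed
  qed
  have "tau ` {..<n} = {..<n}" by (rule endo_inj_surj[OF _ img inj]) simp
  then have "bij_betw tau {..<n} {..<n}" using inj unfolding bij_betw_def by simp
  moreover have "\<And>x. x \<notin> {..<n} \<Longrightarrow> tau x = x"
    using C_sub Sp_sub unfolding tau_def by auto
  ultimately show ?thesis by (rule bij_imp_permutes)
qed

lemma A_eq: "A = Phi n tau xs"
proof (rule eq_matI)
  fix i j assume "i < dim_row (Phi n tau xs)" "j < dim_col (Phi n tau xs)"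
  then have i: "i < n" and j: "j < n" by auto
  have key: "A $$ (i,j) = 1 \<longleftrightarrow> R xs i (tau j)"
  proof (cases "j \<in> C")
    case True
    define l where "l = tau j"
    have l: "l \<in> L" "c l = j" using tau_C[OF True] unfolding l_def by auto
    have nl: "l \<notin> set xs" using l unfolding L_def by simp
    have "A $$ (i,j) = 1 \<longleftrightarrow> i \<in> {i'. i' < n \<and> A $$ (i', c l) = 1}" using i l by simp
    also have "\<dots> \<longleftrightarrow> i = l \<or> i \<in> set xs" using C_col[OF l(1)] by simp
    also have "\<dots> \<longleftrightarrow> R xs i l" using nl unfolding R_def heavy_le_def by auto
    finally show ?thesis unfolding l_def .
  next
    case False
    then obtain b where b: "b < k" "j = dl b" using notC_Sp[OF j] unfolding Sp_def by auto
    have dlC: "dl b \<notin> C" using False b by simp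
    have "R xs i (tau j) \<longleftrightarrow> (\<exists>a. a \<le> b \<and> i = xs!a)"
      using tau_dl b R_nth[OF xs_dist, of b i] by simp
    also have "\<dots> \<longleftrightarrow> A $$ (i,j) = 1"
    proof
      assume "\<exists>a. a \<le> b \<and> i = xs!a"
      then obtain a where "a \<le> b" "i = xs!a" by blast
      then show "A $$ (i,j) = 1" using M_stair[of a b] b unfolding M_def by simp
    next
      assume a1: "A $$ (i,j) = 1"
      then have "i \<in> set xs" using col_heavy_only[OF _ dlC i] dl_prop(1) b by simp
      then obtain a where a: "a < k" "i = xs!a" by (metis in_set_conv_nth xs_len)
      then have "M a b" using a1 b unfolding M_def by simp
      then show "\<exists>a. a \<le> b \<and> i = xs!a" using M_stair[of a b] a b by auto
    qed
    finally show ?thesis by simp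
  qed
  show "A $$ (i,j) = Phi n tau xs $$ (i,j)"
    using key Phi_entry[OF i j, of tau xs] by (cases "A $$ (i,j)") auto
qed auto

lemma A_in_image: "\<exists>t ys. (t, ys) \<in> Dom n k \<and> A = Phi n t ys"
  using A_eq tau_perm xs_dist xs_sub unfolding Dom_def by (intro exI[of _ tau] exI[of _ xs]) auto

end

lemma H_eq:
  assumes kn: "k \<le> n"
  shows "H n k = (\<lambda>(t, xs). Phi n t xs) ` Dom n k"
proof
  show "H n k \<subseteq> (\<lambda>(t, xs). Phi n t xs) ` Dom n k"
  proof
    fix A assume A: "A \<in> H n k"
    interpret HA n k A using kn A by unfold_locales
    obtain t ys where "(t, ys) \<in> Dom n k" "A = Phi n t ys" using A_in_image by blast
    then show "A \<in> (\<lambda>(t, xs). Phi n t xs) ` Dom n k" by force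
  qed
  show "(\<lambda>(t, xs). Phi n t xs) ` Dom n k \<subseteq> H n k" using Phi_in_H by auto
qed

lemma Phi_inj_on: "inj_on (\<lambda>(t, xs). Phi n t xs) (Dom n k)"
  by (rule inj_onI) (use Phi_inj in auto)

lemma Dom_act:
  assumes p: "p permutes {..<n}" and s: "s permutes {..<n}" and D: "(t, xs) \<in> Dom n k"
  shows "(p \<circ> t \<circ> iv s, map p xs) \<in> Dom n k"
proof -
  note DD = Dom_D[OF D]
  have "p \<circ> t \<circ> iv s permutes {..<n}"
    using p s DD(1) by (intro permutes_compose permutes_inv) auto
  moreover have "distinct (map p xs)" using DD(3) p
    by (simp add: distinct_map) (meson inj_on_subset permutes_inj subset_UNIV)
  moreover have "set (map p xs) \<subseteq> {..<n}" using DD(4) perm_in[OF p] by auto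
  ultimately show ?thesis using DD(2) unfolding Dom_def by simp
qed

lemma ffac_zero: "m < k \<Longrightarrow> ffac m k = 0"
  unfolding ffac_def by (rule prod_zero) auto

lemma ffac_eq: "k \<le> m \<Longrightarrow> \<Prod>{m - k + 1..m} = ffac m k"
proof -
  assume km: "k \<le> m"
  have img: "{m - k + 1..m} = (\<lambda>i. m - i) ` {..<k}"
  proof
    show "{m - k + 1..m} \<subseteq> (\<lambda>i. m - i) ` {..<k}"
    proof
      fix x assume x: "x \<in> {m - k + 1..m}"
      then have "x = m - (m - x)" "m - x < k" using km by auto
      then show "x \<in> (\<lambda>i. m - i) ` {..<k}" by blast
    qed
    show "(\<lambda>i. m - i) ` {..<k} \<subseteq> {m - k + 1..m}" using km by auto
  qed
  have inj: "inj_on (\<lambda>i. m - i) {..<k}" using km by (intro inj_onI) auto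
  show ?thesis unfolding img ffac_def using prod.reindex[OF inj, of id] by simp
qed

lemma card_lists_ffac:
  assumes F: "finite F"
  shows "card {xs. length xs = k \<and> distinct xs \<and> set xs \<subseteq> F} = ffac (card F) k"
proof (cases "k \<le> card F")
  case True
  then show ?thesis using card_lists_distinct_length_eq[OF F True] ffac_eq[OF True] by simp
next
  case False
  have e: "{xs. length xs = k \<and> distinct xs \<and> set xs \<subseteq> F} = {}"
  proof (rule ccontr)
    assume "{xs. length xs = k \<and> distinct xs \<and> set xs \<subseteq> F} \<noteq> {}"
    then obtain xs where "length xs = k" "distinct xs" "set xs \<subseteq> F" by blast
    then have "k \<le> card F" using F by (metis card_mono distinct_card)
    then show False using False by simp
  qed
  show ?thesis unfolding e using ffac_zero[of "card F" k] False by simp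
qed

lemma fix_card:
  assumes kn: "k \<le> n" and p: "p permutes {..<n}" and s: "s permutes {..<n}"
  shows "card {A \<in> H n k. act n p s A = A}
    = card {t. t permutes {..<n} \<and> p \<circ> t \<circ> iv s = t} * ffac (n - card (supp n p)) k"
proof -
  let ?Phi = "\<lambda>(t, xs). Phi n t xs"
  define S where "S = {(t, xs) \<in> Dom n k. p \<circ> t \<circ> iv s = t \<and> map p xs = xs}"
  have eq: "{A \<in> H n k. act n p s A = A} = ?Phi ` S"
  proof
    show "{A \<in> H n k. act n p s A = A} \<subseteq> ?Phi ` S"
    proof
      fix A assume "A \<in> {A \<in> H n k. act n p s A = A}"
      then have A: "A \<in> H n k" "act n p s A = A" by auto
      then obtain t xs where D: "(t, xs) \<in> Dom n k" and At: "A = Phi n t xs" using H_eq[OF kn] by auto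
      have "Phi n (p \<circ> t \<circ> iv s) (map p xs) = Phi n t xs"
        using A(2) At Phi_equivariant[OF p s] by simp
      then have "p \<circ> t \<circ> iv s = t \<and> map p xs = xs" using Phi_inj[OF Dom_act[OF p s D] D] by simp
      then show "A \<in> ?Phi ` S" using D At unfolding S_def by force
    qed
    show "?Phi ` S \<subseteq> {A \<in> H n k. act n p s A = A}"
    proof
      fix A assume "A \<in> ?Phi ` S"
      then obtain t xs where D: "(t, xs) \<in> Dom n k" and c: "p \<circ> t \<circ> iv s = t" "map p xs = xs"
        and At: "A = Phi n t xs" unfolding S_def by auto
      have "act n p s A = A" using At Phi_equivariant[OF p s] c by simp
      then show "A \<in> {A \<in> H n k. act n p s A = A}" using Phi_in_H[OF D] At by simp
    qed
  qed
  define T where "T = {t. t permutes {..<n} \<and> p \<circ> t \<circ> iv s = t}"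
  define Ls where "Ls = {xs. length xs = k \<and> distinct xs \<and> set xs \<subseteq> {x. x < n \<and> p x = x}}"
  have c1: "card (?Phi ` S) = card S"
    by (rule card_image) (rule inj_on_subset[OF Phi_inj_on], auto simp: S_def)
  have Seq: "S = T \<times> Ls"
  proof -
    have "\<And>xs. map p xs = xs \<longleftrightarrow> (\<forall>x\<in>set xs. p x = x)"
      by (metis map_eq_conv map_ident)
    then show ?thesis unfolding S_def Dom_def T_def Ls_def by auto
  qed
  have c2: "card {x. x < n \<and> p x = x} = n - card (supp n p)"
  proof -
    have "{x. x < n \<and> p x = x} = {..<n} - supp n p" unfolding supp_def by auto
    moreover have "supp n p \<subseteq> {..<n}" unfolding supp_def by auto
    ultimately show ?thesis by (simp add: card_Diff_subset finite_subset)
  qed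
  have "card {A \<in> H n k. act n p s A = A} = card S" using eq c1 by simp
  also have "\<dots> = card T * card Ls" unfolding Seq by (rule card_cartesian_product)
  also have "card Ls = ffac (card {x. x < n \<and> p x = x}) k"
    unfolding Ls_def by (rule card_lists_ffac) simp
  finally show ?thesis unfolding T_def c2 .
qed

definition Gset :: "nat \<Rightarrow> nat list \<Rightarrow> (nat \<Rightarrow> nat) \<Rightarrow> (nat \<Rightarrow> nat) \<Rightarrow> (nat \<Rightarrow> nat) set" where
  "Gset n la p w = {g \<in> {..<n} \<rightarrow>\<^sub>E {..<n}. (\<forall>x<n. g (p x) = g x) \<and>
          (\<forall>i<n. card {x. x < n \<and> g x = i} + i = part la i + w i)}"

lemma chi_alt: "chi n la p = (\<Sum>w | w permutes {..<n}. sign w * int (card (Gset n la p w)))"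
  unfolding chi_def Gset_def by simp

lemma Gset_card:
  assumes p: "p permutes {..<n}" and t: "t permutes {..<n}"
  shows "card (Gset n la (iv t \<circ> p \<circ> t) w) = card (Gset n la p w)"
proof -
  have tt: "\<And>x. t (iv t x) = x" and it: "\<And>x. iv t (t x) = x"
    using t by (auto intro: permutes_inverses)
  have t': "iv t permutes {..<n}" using t by (rule permutes_inv)
  define f :: "(nat \<Rightarrow> nat) \<Rightarrow> nat \<Rightarrow> nat" where "f = (\<lambda>g. restrict (g \<circ> iv t) {..<n})"
  define f' :: "(nat \<Rightarrow> nat) \<Rightarrow> nat \<Rightarrow> nat" where "f' = (\<lambda>g. restrict (g \<circ> t) {..<n})"
  let ?A = "Gset n la (iv t \<circ> p \<circ> t) w" and ?B = "Gset n la p w"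
  have "bij_betw f ?A ?B"
  proof (rule bij_betw_byWitness)
    show "\<forall>g\<in>?A. f' (f g) = g"
    proof
      fix g assume g: "g \<in> ?A"
      have gP: "g \<in> {..<n} \<rightarrow>\<^sub>E {..<n}" using g unfolding Gset_def by blast
      show "f' (f g) = g"
      proof
        fix x show "f' (f g) x = g x"
        proof (cases "x < n")
          case True
          then have "t x < n" by (rule perm_in[OF t])
          then show ?thesis using True it unfolding f_def f'_def by simp
        next
          case False
          then show ?thesis using PiE_arb[OF gP] unfolding f'_def by simp
        qed
      qed
    qed
    show "\<forall>g\<in>?B. f (f' g) = g"
    proof
      fix g assume g: "g \<in> ?B"
      have gP: "g \<in> {..<n} \<rightarrow>\<^sub>E {..<n}" using g unfolding Gset_def by blast
      show "f (f' g) = g"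
      proof
        fix x show "f (f' g) x = g x"
        proof (cases "x < n")
          case True
          then have "iv t x < n" by (rule perm_inv_in[OF t])
          then show ?thesis using True tt unfolding f_def f'_def by simp
        next
          case False
          then show ?thesis using PiE_arb[OF gP] unfolding f_def by simp
        qed
      qed
    qed
    show "f ` ?A \<subseteq> ?B"
    proof
      fix h assume "h \<in> f ` ?A"
      then obtain g where g: "g \<in> ?A" and h: "h = f g" by auto
      have gP: "g \<in> {..<n} \<rightarrow>\<^sub>E {..<n}" and gq: "\<And>x. x < n \<Longrightarrow> g (iv t (p (t x))) = g x"
        and gc: "\<And>i. i < n \<Longrightarrow> card {x. x < n \<and> g x = i} + i = part la i + w i"
        using g unfolding Gset_def by auto
      have hv: "\<And>y. y < n \<Longrightarrow> h y = g (iv t y)" unfolding h f_def by simp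
      have "h \<in> {..<n} \<rightarrow>\<^sub>E {..<n}" unfolding h f_def
        using gP perm_inv_in[OF t] by (auto simp: restrict_PiE_iff)
      moreover have "\<forall>y<n. h (p y) = h y"
      proof (intro allI impI)
        fix y assume y: "y < n"
        have "h (p y) = g (iv t (p (t (iv t y))))" using hv perm_in[OF p y] tt by simp
        also have "\<dots> = g (iv t y)" using gq[OF perm_inv_in[OF t y]] .
        finally show "h (p y) = h y" using hv y by simp
      qed
      moreover have "\<forall>i<n. card {y. y < n \<and> h y = i} + i = part la i + w i"
      proof (intro allI impI)
        fix i assume i: "i < n"
        have "{y. y < n \<and> h y = i} = {y. y < n \<and> g (iv t y) = i}" using hv by auto
        then have "card {y. y < n \<and> h y = i} = card {x. x < n \<and> g x = i}"
          using perm_card[OF t', of "\<lambda>x. g x = i"] by simp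
        then show "card {y. y < n \<and> h y = i} + i = part la i + w i" using gc[OF i] by simp
      qed
      ultimately show "h \<in> ?B" unfolding Gset_def by simp
    qed
    show "f' ` ?B \<subseteq> ?A"
    proof
      fix h assume "h \<in> f' ` ?B"
      then obtain g where g: "g \<in> ?B" and h: "h = f' g" by auto
      have gP: "g \<in> {..<n} \<rightarrow>\<^sub>E {..<n}" and gq: "\<And>x. x < n \<Longrightarrow> g (p x) = g x"
        and gc: "\<And>i. i < n \<Longrightarrow> card {x. x < n \<and> g x = i} + i = part la i + w i"
        using g unfolding Gset_def by auto
      have hv: "\<And>y. y < n \<Longrightarrow> h y = g (t y)" unfolding h f'_def by simp
      have "h \<in> {..<n} \<rightarrow>\<^sub>E {..<n}" unfolding h f'_def
        using gP perm_in[OF t] by (auto simp: restrict_PiE_iff)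
      moreover have "\<forall>x<n. h ((iv t \<circ> p \<circ> t) x) = h x"
      proof (intro allI impI)
        fix x assume x: "x < n"
        have "iv t (p (t x)) < n" using perm_inv_in[OF t] perm_in[OF p] perm_in[OF t] x by blast
        then have "h ((iv t \<circ> p \<circ> t) x) = g (p (t x))" using hv tt by simp
        also have "\<dots> = g (t x)" using gq[OF perm_in[OF t x]] .
        finally show "h ((iv t \<circ> p \<circ> t) x) = h x" using hv x by simp
      qed
      moreover have "\<forall>i<n. card {y. y < n \<and> h y = i} + i = part la i + w i"
      proof (intro allI impI)
        fix i assume i: "i < n"
        have "{y. y < n \<and> h y = i} = {y. y < n \<and> g (t y) = i}" using hv by auto
        then have "card {y. y < n \<and> h y = i} = card {x. x < n \<and> g x = i}"
          using perm_card[OF t, of "\<lambda>x. g x = i"] by simp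
        then show "card {y. y < n \<and> h y = i} + i = part la i + w i" using gc[OF i] by simp
      qed
      ultimately show "h \<in> ?A" unfolding Gset_def by simp
    qed
  qed
  then show ?thesis by (rule bij_betw_same_card)
qed

lemma chi_conj:
  assumes p: "p permutes {..<n}" and t: "t permutes {..<n}"
  shows "chi n la (iv t \<circ> p \<circ> t) = chi n la p"
  unfolding chi_alt using Gset_card[OF p t] by simp

lemma conj_iff:
  assumes p: "p permutes {..<n}" and t: "t permutes {..<n}" and s: "s permutes {..<n}"
  shows "p \<circ> t \<circ> iv s = t \<longleftrightarrow> s = iv t \<circ> p \<circ> t"
proof
  have ss: "\<And>x. s (iv s x) = x" and is': "\<And>x. iv s (s x) = x" using s by (auto intro: permutes_inverses)
  have tt: "\<And>x. t (iv t x) = x" and it: "\<And>x. iv t (t x) = x" using t by (auto intro: permutes_inverses)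
  {
    assume h: "p \<circ> t \<circ> iv s = t"
    show "s = iv t \<circ> p \<circ> t"
    proof
      fix x
      have "p (t (iv s (s x))) = t (s x)" using h by (metis comp_apply)
      then have "p (t x) = t (s x)" using is' by simp
      then show "s x = (iv t \<circ> p \<circ> t) x" using it by simp
    qed
  next
    assume h: "s = iv t \<circ> p \<circ> t"
    show "p \<circ> t \<circ> iv s = t"
    proof
      fix y
      have "s (iv s y) = iv t (p (t (iv s y)))" using h by simp
      then have "y = iv t (p (t (iv s y)))" using ss by simp
      then have "t y = p (t (iv s y))" using tt by metis
      then show "(p \<circ> t \<circ> iv s) y = t y" by simp
    qed
  }
qed

lemma sum_conj:
  fixes f :: "(nat \<Rightarrow> nat) \<Rightarrow> real"
  assumes p: "p permutes {..<n}"
  shows "(\<Sum>s | s permutes {..<n}. real (card {t. t permutes {..<n} \<and> p \<circ> t \<circ> iv s = t}) * f s)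
       = (\<Sum>t | t permutes {..<n}. f (iv t \<circ> p \<circ> t))"
proof -
  let ?P = "{s. s permutes {..<n}}"
  have fin: "finite ?P" by (simp add: finite_permutations)
  have "(\<Sum>s\<in>?P. real (card {t. t permutes {..<n} \<and> p \<circ> t \<circ> iv s = t}) * f s)
      = (\<Sum>s\<in>?P. \<Sum>t\<in>?P. if p \<circ> t \<circ> iv s = t then f s else 0)"
  proof (rule sum.cong[OF refl])
    fix s assume s: "s \<in> ?P"
    have "(\<Sum>t\<in>{t \<in> ?P. p \<circ> t \<circ> iv s = t}. f s) = (\<Sum>t\<in>?P. if p \<circ> t \<circ> iv s = t then f s else 0)"
      by (rule sum.inter_filter[OF fin])
    moreover have "(\<Sum>t\<in>{t \<in> ?P. p \<circ> t \<circ> iv s = t}. f s) = real (card {t \<in> ?P. p \<circ> t \<circ> iv s = t}) * f s" by simp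
    moreover have "{t \<in> ?P. p \<circ> t \<circ> iv s = t} = {t. t permutes {..<n} \<and> p \<circ> t \<circ> iv s = t}" by simp
    ultimately show "real (card {t. t permutes {..<n} \<and> p \<circ> t \<circ> iv s = t}) * f s = (\<Sum>t\<in>?P. if p \<circ> t \<circ> iv s = t then f s else 0)"
      by simp
  qed
  also have "\<dots> = (\<Sum>t\<in>?P. \<Sum>s\<in>?P. if p \<circ> t \<circ> iv s = t then f s else 0)" by (rule sum.swap)
  also have "\<dots> = (\<Sum>t\<in>?P. f (iv t \<circ> p \<circ> t))"
  proof (rule sum.cong[OF refl])
    fix t assume t: "t \<in> ?P"
    have s0: "iv t \<circ> p \<circ> t \<in> ?P" using t p by (auto intro!: permutes_compose permutes_inv)
    have "(\<Sum>s\<in>?P. if p \<circ> t \<circ> iv s = t then f s else 0) = (\<Sum>s\<in>?P. if s = iv t \<circ> p \<circ> t then f s else 0)"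
      by (rule sum.cong[OF refl]) (use conj_iff[OF p] t in auto)
    also have "\<dots> = f (iv t \<circ> p \<circ> t)" using s0 fin by (simp add: sum.delta')
    finally show "(\<Sum>s\<in>?P. if p \<circ> t \<circ> iv s = t then f s else 0) = f (iv t \<circ> p \<circ> t)" .
  qed
  finally show ?thesis .
qed

theorem mainTheorem9:
  fixes n k :: nat and la mu :: "nat list"
  assumes "k \<le> n" and "is_partition n la" and "is_partition n mu"
  shows "mult_perm_rep n (H n k) (act n) la mu =
    (1 / fact n) * (\<Sum>p | p permutes {..<n}.
       of_int (chi n la p) * of_int (chi n mu p) * real (ffac (n - card (supp n p)) k))"
proof -
  let ?P = "{p. p permutes {..<n}}"
  have cP: "card ?P = fact n" by (rule card_permutations) auto
  define X where "X p = of_int (chi n la p) * of_int (chi n mu p) * real (ffac (n - card (supp n p)) k)" for p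
  have inner: "(\<Sum>s\<in>?P. real (card {x \<in> H n k. act n p s x = x}) * of_int (chi n la p) * of_int (chi n mu s))
      = fact n * X p" if p: "p \<in> ?P" for p
  proof -
    have pp: "p permutes {..<n}" using p by simp
    let ?a = "of_int (chi n la p) * real (ffac (n - card (supp n p)) k) :: real"
    have "(\<Sum>s\<in>?P. real (card {x \<in> H n k. act n p s x = x}) * of_int (chi n la p) * of_int (chi n mu s))
      = (\<Sum>s\<in>?P. ?a * (real (card {t. t permutes {..<n} \<and> p \<circ> t \<circ> iv s = t}) * of_int (chi n mu s)))"
    proof (rule sum.cong[OF refl])
      fix s assume "s \<in> ?P"
      then have ss: "s permutes {..<n}" by simp
      show "real (card {x \<in> H n k. act n p s x = x}) * of_int (chi n la p) * of_int (chi n mu s)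
          = ?a * (real (card {t. t permutes {..<n} \<and> p \<circ> t \<circ> iv s = t}) * of_int (chi n mu s))"
        unfolding fix_card[OF assms(1) pp ss] by (simp add: algebra_simps)
    qed
    also have "\<dots> = ?a * (\<Sum>s\<in>?P. real (card {t. t permutes {..<n} \<and> p \<circ> t \<circ> iv s = t}) * of_int (chi n mu s))"
      by (rule sum_distrib_left[symmetric])
    also have "(\<Sum>s\<in>?P. real (card {t. t permutes {..<n} \<and> p \<circ> t \<circ> iv s = t}) * of_int (chi n mu s))
        = (\<Sum>t\<in>?P. of_int (chi n mu (iv t \<circ> p \<circ> t)))"
      by (rule sum_conj[OF pp])
    also have "\<dots> = (\<Sum>t\<in>?P. of_int (chi n mu p))"
      by (rule sum.cong[OF refl]) (simp add: chi_conj[OF pp])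
    also have "\<dots> = fact n * of_int (chi n mu p)" using cP by simp
    finally show ?thesis unfolding X_def by (simp add: algebra_simps)
  qed
  have "mult_perm_rep n (H n k) (act n) la mu = (1 / (fact n)^2) * (\<Sum>p\<in>?P. fact n * X p)"
    unfolding mult_perm_rep_def using inner by simp
  also have "\<dots> = (1 / fact n) * (\<Sum>p\<in>?P. X p)"
    by (simp add: sum_distrib_left[symmetric] power2_eq_square)
  finally show ?thesis unfolding X_def by simp
qed


end
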